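(* Let $c\in\mathbb{R}$ with $c\neq 1$, and let $f:\mathbb{R}\to\mathbb{R}$ be a twice differentiable function satisfying $(c^2-1)f''(z)+\sin f(z)=0$. Fix $\zeta\in\mathbb{C}\setminus\{0\}$ and define $$A=-\frac{i\left(4(1+c)\zeta^2-(c-1)\cos f(z)\right)}{8\zeta},\quad B=\frac{(c-1)\left(i\sin f(z)+2(c+1)\zeta f'(z)\right)}{8\zeta},\quad \tilde B=\frac{(c-1)\left(i\sin f(z)-2(c+1)\zeta f'(z)\right)}{8\zeta},$$ $$C=-\frac{i\zeta}{2}+\frac{i\cos f(z)}{8\zeta},\quad D=\frac{i\sin f(z)}{8\zeta}+\frac{(c-1)f'(z)}{4},\quad \tilde D=\frac{i\sin f(z)}{8\zeta}-\frac{(c-1)f'(z)}{4}.$$ Let $\chi(z,\tau)=(\chi_1(z,\tau),\chi_2(z,\tau))^T$ be any simultaneous solution of $$\chi_z=\begin{pmatrix} C & D\\ \tilde D & -C\end{pmatrix}\chi,\qquad \chi_\tau=\begin{pmatrix} A & B\\ \tilde B & -A\end{pmatrix}\chi.$$ Then $w(z,\tau)=\chi_1(z,\tau)^2+\chi_2(z,\tau)^2$ satisfies $$(c^2-1)w_{zz}-2c\,w_{z\tau}+w_{\tau\tau}+\cos\left(f(z)\right)w=0.$$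
   Context: This is the Lax pair of the sine-Gordon equation $u_{tt}-u_{xx}+\sin u=0$ written in the traveling frame $z=x-ct$, $\tau=t$ and evaluated at the stationary solution $u=f(z)$; the equation for $w$ is the linearization of the traveling-frame sine-Gordon equation $(c^2-1)v_{zz}-2cv_{z\tau}+v_{\tau\tau}+\sin v=0$ about $v=f(z)$. *)

theory Defs
  imports "HOL-Analysis.Analysis"
begin

text \<open>Lax-pair coefficients; arguments: speed c, spectral parameter zeta,
  value u = f(z) and slope p = f'(z).\<close>

definition LA :: "real \<Rightarrow> complex \<Rightarrow> real \<Rightarrow> real \<Rightarrow> complex" where
  "LA c \<zeta> u p = - (\<i> * (4 * (1 + of_real c) * \<zeta>\<^sup>2 - (of_real c - 1) * of_real (cos u))) / (8 * \<zeta>)"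

definition LB :: "real \<Rightarrow> complex \<Rightarrow> real \<Rightarrow> real \<Rightarrow> complex" where
  "LB c \<zeta> u p = (of_real c - 1) * (\<i> * of_real (sin u) + 2 * (of_real c + 1) * \<zeta> * of_real p) / (8 * \<zeta>)"

definition LBt :: "real \<Rightarrow> complex \<Rightarrow> real \<Rightarrow> real \<Rightarrow> complex" where
  "LBt c \<zeta> u p = (of_real c - 1) * (\<i> * of_real (sin u) - 2 * (of_real c + 1) * \<zeta> * of_real p) / (8 * \<zeta>)"

definition LC :: "real \<Rightarrow> complex \<Rightarrow> real \<Rightarrow> real \<Rightarrow> complex" where
  "LC c \<zeta> u p = - (\<i> * \<zeta>) / 2 + \<i> * of_real (cos u) / (8 * \<zeta>)"

definition LD :: "real \<Rightarrow> complex \<Rightarrow> real \<Rightarrow> real \<Rightarrow> complex" where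
  "LD c \<zeta> u p = \<i> * of_real (sin u) / (8 * \<zeta>) + (of_real c - 1) * of_real p / 4"

definition LDt :: "real \<Rightarrow> complex \<Rightarrow> real \<Rightarrow> real \<Rightarrow> complex" where
  "LDt c \<zeta> u p = \<i> * of_real (sin u) / (8 * \<zeta>) - (of_real c - 1) * of_real p / 4"

end

theory Submission
  imports Defs
begin


lemma quad_deriv:
  fixes x1 x2 a b e :: "real \<Rightarrow> complex"
  assumes "(x1 has_vector_derivative x1') (at t)" "(x2 has_vector_derivative x2') (at t)"
    "(a has_vector_derivative a') (at t)" "(b has_vector_derivative b') (at t)"
    "(e has_vector_derivative e') (at t)"
  shows "((\<lambda>s. a s * (x1 s * x1 s) + b s * (x2 s * x2 s) + e s * (x1 s * x2 s)) has_vector_derivative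
     (a' * (x1 t * x1 t) + a t * (2 * x1 t * x1') + b' * (x2 t * x2 t) + b t * (2 * x2 t * x2')
      + e' * (x1 t * x2 t) + e t * (x1' * x2 t + x1 t * x2'))) (at t)"
proof -
  have "((\<lambda>s. a s * (x1 s * x1 s) + b s * (x2 s * x2 s) + e s * (x1 s * x2 s)) has_vector_derivative
     (a t * (x1 t * x1' + x1' * x1 t) + a' * (x1 t * x1 t) + (b t * (x2 t * x2' + x2' * x2 t) + b' * (x2 t * x2 t))
      + (e t * (x1 t * x2' + x1' * x2 t) + e' * (x1 t * x2 t)))) (at t)"
    by (intro has_vector_derivative_add has_vector_derivative_mult assms)
  then show ?thesis by (rule has_vector_derivative_eq_rhs) (simp add: algebra_simps)
qed

lemma alg3:
  fixes z c s k p :: complex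
  assumes "z \<noteq> 0"
  defines "A \<equiv> - (\<i> * (4 * (1 + c) * z\<^sup>2 - (c - 1) * k)) / (8 * z)"
    and "B \<equiv> (c - 1) * (\<i> * s + 2 * (c + 1) * z * p) / (8 * z)"
    and "Bt \<equiv> (c - 1) * (\<i> * s - 2 * (c + 1) * z * p) / (8 * z)"
    and "C \<equiv> - (\<i> * z) / 2 + \<i> * k / (8 * z)"
    and "D \<equiv> \<i> * s / (8 * z) + (c - 1) * p / 4"
    and "Dt \<equiv> \<i> * s / (8 * z) - (c - 1) * p / 4"
    and "C' \<equiv> \<i> * (- s * p) / (8 * z)"
    and "E' \<equiv> \<i> * (k * p) / (4 * z)"
  shows "(c\<^sup>2 - 1) * (2*C' + 4*C*C + 2*Dt*(D+Dt)) - 2*c*(4*A*C + 2*Bt*(D+Dt)) + 4*A*A + 2*Bt*(B+Bt) + k = 0"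
    and "(c\<^sup>2 - 1) * (-2*C' + 4*C*C + 2*D*(D+Dt)) - 2*c*(4*A*C + 2*B*(D+Dt)) + 4*A*A + 2*B*(B+Bt) + k = 0"
    and "(c\<^sup>2 - 1) * (2*E' + 4*D*C - 4*Dt*C) - 2*c*(4*B*C - 4*Bt*C) + 4*B*A - 4*Bt*A = 0"
  using assms(1) unfolding assms(2-)
  by (simp_all add: field_simps power2_eq_square)

theorem theorem1:
  fixes c :: real and f f' f'' :: "real \<Rightarrow> real" and \<zeta> :: complex
    and \<chi>1 \<chi>2 :: "real \<Rightarrow> real \<Rightarrow> complex"
  assumes hc: "c \<noteq> 1"
    and hf: "\<And>z. (f has_real_derivative f' z) (at z)"
    and hf': "\<And>z. (f' has_real_derivative f'' z) (at z)"
    and hode: "\<And>z. (c\<^sup>2 - 1) * f'' z + sin (f z) = 0"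
    and h\<zeta>: "\<zeta> \<noteq> 0"
    and hz1: "\<And>z \<tau>. ((\<lambda>s. \<chi>1 s \<tau>) has_vector_derivative
        (LC c \<zeta> (f z) (f' z) * \<chi>1 z \<tau> + LD c \<zeta> (f z) (f' z) * \<chi>2 z \<tau>)) (at z)"
    and hz2: "\<And>z \<tau>. ((\<lambda>s. \<chi>2 s \<tau>) has_vector_derivative
        (LDt c \<zeta> (f z) (f' z) * \<chi>1 z \<tau> - LC c \<zeta> (f z) (f' z) * \<chi>2 z \<tau>)) (at z)"
    and ht1: "\<And>z \<tau>. ((\<lambda>t. \<chi>1 z t) has_vector_derivative
        (LA c \<zeta> (f z) (f' z) * \<chi>1 z \<tau> + LB c \<zeta> (f z) (f' z) * \<chi>2 z \<tau>)) (at \<tau>)"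
    and ht2: "\<And>z \<tau>. ((\<lambda>t. \<chi>2 z t) has_vector_derivative
        (LBt c \<zeta> (f z) (f' z) * \<chi>1 z \<tau> - LA c \<zeta> (f z) (f' z) * \<chi>2 z \<tau>)) (at \<tau>)"
  defines "w \<equiv> (\<lambda>z \<tau>. (\<chi>1 z \<tau>)\<^sup>2 + (\<chi>2 z \<tau>)\<^sup>2)"
  defines "w_z \<equiv> (\<lambda>z \<tau>. vector_derivative (\<lambda>s. w s \<tau>) (at z))"
  defines "w_t \<equiv> (\<lambda>z \<tau>. vector_derivative (\<lambda>t. w z t) (at \<tau>))"
  defines "w_zz \<equiv> (\<lambda>z \<tau>. vector_derivative (\<lambda>s. w_z s \<tau>) (at z))"
  defines "w_zt \<equiv> (\<lambda>z \<tau>. vector_derivative (\<lambda>t. w_z z t) (at \<tau>))"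
  defines "w_tt \<equiv> (\<lambda>z \<tau>. vector_derivative (\<lambda>t. w_t z t) (at \<tau>))"
  shows "\<forall>z \<tau>. (\<lambda>s. w s \<tau>) differentiable (at z) \<and> (\<lambda>t. w z t) differentiable (at \<tau>)
      \<and> (\<lambda>s. w_z s \<tau>) differentiable (at z) \<and> (\<lambda>t. w_z z t) differentiable (at \<tau>)
      \<and> (\<lambda>t. w_t z t) differentiable (at \<tau>)
      \<and> of_real (c\<^sup>2 - 1) * w_zz z \<tau> - 2 * of_real c * w_zt z \<tau> + w_tt z \<tau>
          + of_real (cos (f z)) * w z \<tau> = 0"
  proof (intro allI)
  fix z \<tau>
  define K where "K s = complex_of_real (cos (f s))" for s
  define S where "S s = complex_of_real (sin (f s))" for s
  define P where "P s = complex_of_real (f' s)" for s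
  define Cf where "Cf s = - (\<i> * \<zeta>) / 2 + \<i> * K s / (8 * \<zeta>)" for s
  define Ef where "Ef s = \<i> * S s / (4 * \<zeta>)" for s
  define Af where "Af s = LA c \<zeta> (f s) (f' s)" for s
  define Gf where "Gf s = LB c \<zeta> (f s) (f' s) + LBt c \<zeta> (f s) (f' s)" for s
  have LCe: "LC c \<zeta> (f s) (f' s) = Cf s" for s by (simp add: LC_def Cf_def K_def)
  have LDe: "LD c \<zeta> (f s) (f' s) + LDt c \<zeta> (f s) (f' s) = Ef s" for s
    using h\<zeta> by (simp add: LD_def LDt_def Ef_def S_def field_simps)
  have Ge: "Gf s = (of_real c - 1) * \<i> * S s / (4 * \<zeta>)" for s
    using h\<zeta> by (simp add: LB_def LBt_def Gf_def S_def field_simps)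
  define Wz where "Wz s t = 2 * Cf s * (\<chi>1 s t * \<chi>1 s t) + (- 2 * Cf s) * (\<chi>2 s t * \<chi>2 s t)
      + 2 * Ef s * (\<chi>1 s t * \<chi>2 s t)" for s t
  define Wt where "Wt s t = 2 * Af s * (\<chi>1 s t * \<chi>1 s t) + (- 2 * Af s) * (\<chi>2 s t * \<chi>2 s t)
      + 2 * Gf s * (\<chi>1 s t * \<chi>2 s t)" for s t
  have wq: "w s t = 1 * (\<chi>1 s t * \<chi>1 s t) + 1 * (\<chi>2 s t * \<chi>2 s t) + 0 * (\<chi>1 s t * \<chi>2 s t)" for s t
    by (simp add: w_def power2_eq_square)
  have dwz: "((\<lambda>s. w s t) has_vector_derivative Wz s0 t) (at s0)" for s0 t
    unfolding wq
    by (rule has_vector_derivative_eq_rhs, rule quad_deriv[where a="\<lambda>_. 1" and b="\<lambda>_. 1" and e="\<lambda>_. 0", OF hz1 hz2 has_vector_derivative_const has_vector_derivative_const has_vector_derivative_const], auto simp: Wz_def LCe LDe[symmetric] algebra_simps)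
  have dwt: "((\<lambda>t. w s0 t) has_vector_derivative Wt s0 t0) (at t0)" for s0 t0
    unfolding wq
    by (rule has_vector_derivative_eq_rhs, rule quad_deriv[where a="\<lambda>_. 1" and b="\<lambda>_. 1" and e="\<lambda>_. 0", OF ht1 ht2 has_vector_derivative_const has_vector_derivative_const has_vector_derivative_const], auto simp: Wt_def Af_def Gf_def algebra_simps)
  have wz_eq: "w_z = Wz" using dwz by (auto simp: w_z_def fun_eq_iff intro!: vector_derivative_at)
  have wt_eq: "w_t = Wt" using dwt by (auto simp: w_t_def fun_eq_iff intro!: vector_derivative_at)
  have dK: "(K has_vector_derivative of_real (- sin (f z) * f' z)) (at z)"
    unfolding K_def by (intro has_vector_derivative_of_real DERIV_chain2[OF DERIV_cos hf])
  have dS: "(S has_vector_derivative of_real (cos (f z) * f' z)) (at z)"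
    unfolding S_def by (intro has_vector_derivative_of_real DERIV_chain2[OF DERIV_sin hf])
  have dC: "(Cf has_vector_derivative \<i> * of_real (- sin (f z) * f' z) / (8 * \<zeta>)) (at z)"
    unfolding Cf_def[abs_def]
    by (rule has_vector_derivative_eq_rhs[OF has_vector_derivative_add[OF has_vector_derivative_const has_vector_derivative_divide[OF has_vector_derivative_mult_right[OF dK]]]]) simp
  have dE: "(Ef has_vector_derivative \<i> * of_real (cos (f z) * f' z) / (4 * \<zeta>)) (at z)"
    unfolding Ef_def[abs_def]
    by (intro has_vector_derivative_divide has_vector_derivative_mult_right dS)
  have d2C: "((\<lambda>s. 2 * Cf s) has_vector_derivative 2 * (\<i> * of_real (- sin (f z) * f' z) / (8 * \<zeta>))) (at z)"
    by (intro has_vector_derivative_mult_right dC)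
  have dm2C: "((\<lambda>s. - 2 * Cf s) has_vector_derivative - 2 * (\<i> * of_real (- sin (f z) * f' z) / (8 * \<zeta>))) (at z)"
    by (intro has_vector_derivative_mult_right dC)
  have d2E: "((\<lambda>s. 2 * Ef s) has_vector_derivative 2 * (\<i> * of_real (cos (f z) * f' z) / (4 * \<zeta>))) (at z)"
    by (intro has_vector_derivative_mult_right dE)
  note Dzz = quad_deriv[OF hz1[where z=z and \<tau>=\<tau>] hz2[where z=z and \<tau>=\<tau>] d2C dm2C d2E]
  note Dzt = quad_deriv[where a="\<lambda>_. 2 * Cf z" and b="\<lambda>_. - 2 * Cf z" and e="\<lambda>_. 2 * Ef z", OF ht1[where z=z and \<tau>=\<tau>] ht2[where z=z and \<tau>=\<tau>] has_vector_derivative_const has_vector_derivative_const has_vector_derivative_const]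
  note Dtt = quad_deriv[where a="\<lambda>_. 2 * Af z" and b="\<lambda>_. - 2 * Af z" and e="\<lambda>_. 2 * Gf z", OF ht1[where z=z and \<tau>=\<tau>] ht2[where z=z and \<tau>=\<tau>] has_vector_derivative_const has_vector_derivative_const has_vector_derivative_const]
  have fz: "(\<lambda>s. w_z s \<tau>) = (\<lambda>s. 2 * Cf s * (\<chi>1 s \<tau> * \<chi>1 s \<tau>) + (- 2 * Cf s) * (\<chi>2 s \<tau> * \<chi>2 s \<tau>) + 2 * Ef s * (\<chi>1 s \<tau> * \<chi>2 s \<tau>))"
    by (simp add: wz_eq Wz_def)
  have ft: "(\<lambda>t. w_z z t) = (\<lambda>t. 2 * Cf z * (\<chi>1 z t * \<chi>1 z t) + (- 2 * Cf z) * (\<chi>2 z t * \<chi>2 z t) + 2 * Ef z * (\<chi>1 z t * \<chi>2 z t))"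
    by (simp add: wz_eq Wz_def)
  have ftt: "(\<lambda>t. w_t z t) = (\<lambda>t. 2 * Af z * (\<chi>1 z t * \<chi>1 z t) + (- 2 * Af z) * (\<chi>2 z t * \<chi>2 z t) + 2 * Gf z * (\<chi>1 z t * \<chi>2 z t))"
    by (simp add: wt_eq Wt_def)
  note Dzz' = Dzz[folded fz] and Dzt' = Dzt[folded ft] and Dtt' = Dtt[folded ftt]
  have d1: "(\<lambda>s. w s \<tau>) differentiable (at z)" using dwz differentiableI_vector by blast
  have d2: "(\<lambda>t. w z t) differentiable (at \<tau>)" using dwt differentiableI_vector by blast
  have d3: "(\<lambda>s. w_z s \<tau>) differentiable (at z)" using Dzz' differentiableI_vector by blast
  have d4: "(\<lambda>t. w_z z t) differentiable (at \<tau>)" using Dzt' differentiableI_vector by blast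
  have d5: "(\<lambda>t. w_t z t) differentiable (at \<tau>)" using Dtt' differentiableI_vector by blast
  show "(\<lambda>s. w s \<tau>) differentiable (at z) \<and> (\<lambda>t. w z t) differentiable (at \<tau>)
      \<and> (\<lambda>s. w_z s \<tau>) differentiable (at z) \<and> (\<lambda>t. w_z z t) differentiable (at \<tau>)
      \<and> (\<lambda>t. w_t z t) differentiable (at \<tau>)
      \<and> of_real (c\<^sup>2 - 1) * w_zz z \<tau> - 2 * of_real c * w_zt z \<tau> + w_tt z \<tau>
          + of_real (cos (f z)) * w z \<tau> = 0"
  proof (intro conjI d1 d2 d3 d4 d5)
    show "of_real (c\<^sup>2 - 1) * w_zz z \<tau> - 2 * of_real c * w_zt z \<tau> + w_tt z \<tau>
          + of_real (cos (f z)) * w z \<tau> = 0"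
    proof -
      define x where "x = \<chi>1 z \<tau>"
      define y where "y = \<chi>2 z \<tau>"
      define A0 where "A0 = LA c \<zeta> (f z) (f' z)"
      define B0 where "B0 = LB c \<zeta> (f z) (f' z)"
      define Bt0 where "Bt0 = LBt c \<zeta> (f z) (f' z)"
      define C0 where "C0 = LC c \<zeta> (f z) (f' z)"
      define D0 where "D0 = LD c \<zeta> (f z) (f' z)"
      define Dt0 where "Dt0 = LDt c \<zeta> (f z) (f' z)"
      define C1 where "C1 = \<i> * (- complex_of_real (sin (f z)) * complex_of_real (f' z)) / (8 * \<zeta>)"
      define E1 where "E1 = \<i> * (complex_of_real (cos (f z)) * complex_of_real (f' z)) / (4 * \<zeta>)"
      define k0 where "k0 = complex_of_real (cos (f z))"
      define c0 where "c0 = complex_of_real c"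
      have r: "Cf z = C0" "LC c \<zeta> (f z) (f' z) = C0" "Ef z = D0 + Dt0" "LD c \<zeta> (f z) (f' z) = D0"
        "LDt c \<zeta> (f z) (f' z) = Dt0" "Af z = A0" "LA c \<zeta> (f z) (f' z) = A0" "Gf z = B0 + Bt0"
        "LB c \<zeta> (f z) (f' z) = B0" "LBt c \<zeta> (f z) (f' z) = Bt0"
        "\<i> * complex_of_real (- sin (f z) * f' z) / (8 * \<zeta>) = C1"
        "\<i> * complex_of_real (cos (f z) * f' z) / (4 * \<zeta>) = E1"
        "complex_of_real (cos (f z)) = k0" "w z \<tau> = x * x + y * y"
        "complex_of_real (c\<^sup>2 - 1) = c0\<^sup>2 - 1" "complex_of_real c = c0"
        "\<chi>1 z \<tau> = x" "\<chi>2 z \<tau> = y"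
        using LCe LDe by (simp_all add: A0_def B0_def Bt0_def C0_def D0_def Dt0_def C1_def E1_def k0_def c0_def
            Af_def Gf_def x_def y_def w_def power2_eq_square)
      have a1: "(c0\<^sup>2 - 1) * (2*C1 + 4*C0*C0 + 2*Dt0*(D0+Dt0)) - 2*c0*(4*A0*C0 + 2*Bt0*(D0+Dt0)) + 4*A0*A0 + 2*Bt0*(B0+Bt0) + k0 = 0"
       and a2: "(c0\<^sup>2 - 1) * (-2*C1 + 4*C0*C0 + 2*D0*(D0+Dt0)) - 2*c0*(4*A0*C0 + 2*B0*(D0+Dt0)) + 4*A0*A0 + 2*B0*(B0+Bt0) + k0 = 0"
       and a3: "(c0\<^sup>2 - 1) * (2*E1 + 4*D0*C0 - 4*Dt0*C0) - 2*c0*(4*B0*C0 - 4*Bt0*C0) + 4*B0*A0 - 4*Bt0*A0 = 0"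
        using alg3[where c=c0 and s="complex_of_real (sin (f z))" and k=k0 and p="complex_of_real (f' z)", OF h\<zeta>]
        unfolding A0_def B0_def Bt0_def C0_def D0_def Dt0_def C1_def E1_def LA_def LB_def LBt_def LC_def LD_def LDt_def k0_def c0_def
        by auto
      have H: "x*x*((c0\<^sup>2 - 1) * (2*C1 + 4*C0*C0 + 2*Dt0*(D0+Dt0)) - 2*c0*(4*A0*C0 + 2*Bt0*(D0+Dt0)) + 4*A0*A0 + 2*Bt0*(B0+Bt0) + k0)
        + y*y*((c0\<^sup>2 - 1) * (-2*C1 + 4*C0*C0 + 2*D0*(D0+Dt0)) - 2*c0*(4*A0*C0 + 2*B0*(D0+Dt0)) + 4*A0*A0 + 2*B0*(B0+Bt0) + k0)
        + x*y*((c0\<^sup>2 - 1) * (2*E1 + 4*D0*C0 - 4*Dt0*C0) - 2*c0*(4*B0*C0 - 4*Bt0*C0) + 4*B0*A0 - 4*Bt0*A0) = 0"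
        using a1 a2 a3 by simp
      show ?thesis
        unfolding w_zz_def w_zt_def w_tt_def vector_derivative_at[OF Dzz'] vector_derivative_at[OF Dzt'] vector_derivative_at[OF Dtt'] r
        using H by (simp add: algebra_simps power2_eq_square)
    qed
  qed
qed

end
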